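(* Let $d,\ell$ be positive integers and let $\Gamma=B(d,\ell)$ be the De Bruijn digraph. Fix $x_1,\ldots,x_{\ell-1}\in\mathbb{Z}_d$, not all equal, and let $X=\{x_1x_2\ldots x_{\ell-1}k : k\in\mathbb{Z}_d\}$. For each $j\in\mathbb{Z}_d$ let $\alpha_j$ be a permutation of $\mathbb{Z}_d=\{0,1,\ldots,d-1\}$. Let $\Gamma'=B'(d,\ell)$ be the digraph obtained from $\Gamma$ by changing the out-going arcs of the vertices of $X$ (all other arcs unchanged) so that every vertex $x_1x_2\ldots x_{\ell-1}k\in X$ is adjacent exactly to the $d$ vertices $$x_2x_3\ldots x_{\ell-1}\,\alpha_j(k)\,j,\qquad j=0,1,\ldots,d-1.$$ Then $\Gamma'$ is a $d$-regular digraph with diameter $\ell$ (the same as that of $B(d,\ell)$), and it is $\ell$-reachable.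
   Context: The De Bruijn digraph $B(d,\ell)$ has as vertices all words $a_1a_2\ldots a_\ell$ of length $\ell$ over the alphabet $\mathbb{Z}_d=\{0,1,\ldots,d-1\}$, and there is an arc from $a_1\ldots a_\ell$ to $b_1\ldots b_\ell$ if and only if $a_2\ldots a_\ell=b_1\ldots b_{\ell-1}$ (loops allowed). A digraph is $d$-regular if every vertex has in-degree and out-degree $d$. A digraph with diameter $D$ is $\ell$-reachable if $\ell$ is the smallest integer $m\ge D$ such that for every ordered pair of vertices $u,v$ there is a walk of length exactly $m$ from $u$ to $v$. *)

theory Defs
  imports Main
begin

text \<open>Digraphs are given by a vertex set V and an arc relation A (a subset of V x V).
  Walks of length exactly m from u to v correspond to (u,v) in A ^^ m.\<close>

definition debruijn_vertices :: "nat \<Rightarrow> nat \<Rightarrow> nat list set" where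
  "debruijn_vertices d l = {w. length w = l \<and> set w \<subseteq> {..<d}}"

definition debruijn_arcs :: "nat \<Rightarrow> nat \<Rightarrow> (nat list \<times> nat list) set" where
  "debruijn_arcs d l = {(a, b). a \<in> debruijn_vertices d l \<and> b \<in> debruijn_vertices d l
                                 \<and> tl a = butlast b}"

definition modX :: "nat \<Rightarrow> nat list \<Rightarrow> nat list set" where
  "modX d xs = {xs @ [k] | k. k < d}"

definition modified_debruijn_arcs ::
  "nat \<Rightarrow> nat \<Rightarrow> nat list \<Rightarrow> (nat \<Rightarrow> nat \<Rightarrow> nat) \<Rightarrow> (nat list \<times> nat list) set" where
  "modified_debruijn_arcs d l xs \<alpha> =
     {(a, b). (a, b) \<in> debruijn_arcs d l \<and> a \<notin> modX d xs}
     \<union> {(xs @ [k], tl xs @ [\<alpha> j k, j]) | k j. k < d \<and> j < d}"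

definition d_regular :: "'a set \<Rightarrow> ('a \<times> 'a) set \<Rightarrow> nat \<Rightarrow> bool" where
  "d_regular V A d \<longleftrightarrow>
     (\<forall>v\<in>V. card {w. (v, w) \<in> A} = d \<and> card {u. (u, v) \<in> A} = d)"

definition has_diameter :: "'a set \<Rightarrow> ('a \<times> 'a) set \<Rightarrow> nat \<Rightarrow> bool" where
  "has_diameter V A D \<longleftrightarrow>
     (\<forall>u\<in>V. \<forall>v\<in>V. \<exists>m\<le>D. (u, v) \<in> A ^^ m)
     \<and> (\<exists>u\<in>V. \<exists>v\<in>V. \<forall>m<D. (u, v) \<notin> A ^^ m)"

definition all_pairs_walk :: "'a set \<Rightarrow> ('a \<times> 'a) set \<Rightarrow> nat \<Rightarrow> bool" where
  "all_pairs_walk V A m \<longleftrightarrow> (\<forall>u\<in>V. \<forall>v\<in>V. (u, v) \<in> A ^^ m)"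

definition reachable_exactly :: "'a set \<Rightarrow> ('a \<times> 'a) set \<Rightarrow> nat \<Rightarrow> bool" where
  "reachable_exactly V A l \<longleftrightarrow>
     (\<exists>D. has_diameter V A D \<and> D \<le> l \<and> all_pairs_walk V A l
          \<and> (\<forall>m. D \<le> m \<and> m < l \<longrightarrow> \<not> all_pairs_walk V A m))"

end

theory Submission
  imports Defs
begin


lemma take_tl_eq: "take n (tl xs) = tl (take (Suc n) xs)"
  by (cases xs) auto

lemma bb_decomp: "length v \<ge> 2 \<Longrightarrow> v = butlast (butlast v) @ [v ! (length v - 2), last v]"
proof -
  assume a: "length v \<ge> 2"
  obtain w x y where "v = w @ [x, y]"
  proof -
    have "v \<noteq> []" using a by auto
    then have v1: "v = butlast v @ [last v]" by simp
    have "butlast v \<noteq> []" using a by (cases v rule: rev_cases) auto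
    then have "butlast v = butlast (butlast v) @ [last (butlast v)]" by simp
    with v1 have "v = butlast (butlast v) @ [last (butlast v), last v]" by (metis append.assoc append_Cons append_Nil)
    then show ?thesis using that by blast
  qed
  then show ?thesis by (simp add: nth_append butlast_append)
qed

locale DB =
  fixes d l :: nat and xs :: "nat list" and \<alpha> :: "nat \<Rightarrow> nat \<Rightarrow> nat"
  assumes l0: "0 < l" and lenxs: "length xs = l - 1" and setxs: "set xs \<subseteq> {..<d}"
    and nc: "\<exists>i<length xs. \<exists>j<length xs. xs ! i \<noteq> xs ! j"
    and bij: "\<forall>j<d. bij_betw (\<alpha> j) {..<d} {..<d}"
begin

abbreviation "V \<equiv> debruijn_vertices d l"
abbreviation "A \<equiv> modified_debruijn_arcs d l xs \<alpha>"
abbreviation "B \<equiv> debruijn_arcs d l"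

lemma l3: "l \<ge> 3" and d2: "d \<ge> 2"
proof -
  obtain i j where ij: "i < length xs" "j < length xs" "xs ! i \<noteq> xs ! j" using nc by blast
  then have "i \<noteq> j" by auto
  then show "l \<ge> 3" using ij lenxs by linarith
  have "xs ! i < d" "xs ! j < d" using ij setxs nth_mem by blast+
  then show "d \<ge> 2" using ij(3) by linarith
qed

lemma xs_ne: "xs \<noteq> []" using l3 lenxs by auto

lemma all_eq_contra: assumes "\<forall>i<length xs. xs ! i = xs ! 0" shows False
proof -
  obtain i j where ij: "i < length xs" "j < length xs" "xs ! i \<noteq> xs ! j" using nc by blast
  then show False using assms by metis
qed

lemma not_const: "tl xs @ [a] \<noteq> xs"
proof
  assume h: "tl xs @ [a] = xs"
  have step: "xs ! Suc i = xs ! i" if "Suc i < length xs" for i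
  proof -
    have "xs ! i = (tl xs @ [a]) ! i" using h by simp
    also have "\<dots> = tl xs ! i" proof -
      have "i < length (tl xs)" using that by simp
      then show ?thesis by (simp add: nth_append)
    qed
    also have "\<dots> = xs ! Suc i" using that by (simp add: nth_tl)
    finally show ?thesis by simp
  qed
  have "\<forall>i<length xs. xs ! i = xs ! 0"
  proof (intro allI impI)
    fix i assume "i < length xs"
    then show "xs ! i = xs ! 0"
      by (induction i) (auto simp: step)
  qed
  then show False by (rule all_eq_contra)
qed

lemma not_rep: "replicate (l-1) c \<noteq> xs"
proof
  assume h: "replicate (l-1) c = xs"
  have "\<forall>i<length xs. xs ! i = xs ! 0" using h[symmetric] xs_ne by auto
  then show False by (rule all_eq_contra)
qed

lemma alpha_range: "j < d \<Longrightarrow> k < d \<Longrightarrow> \<alpha> j k < d"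
  using bij bij_betw_apply by fastforce

lemma alpha_surj: "j < d \<Longrightarrow> a < d \<Longrightarrow> \<exists>k<d. \<alpha> j k = a"
proof -
  assume "j < d" "a < d"
  then have "a \<in> \<alpha> j ` {..<d}" using bij bij_betw_imp_surj_on by fastforce
  then show ?thesis by auto
qed

lemma alpha_inj: "j < d \<Longrightarrow> k < d \<Longrightarrow> k' < d \<Longrightarrow> \<alpha> j k = \<alpha> j k' \<Longrightarrow> k = k'"
  using bij bij_betw_imp_inj_on inj_onD by (metis lessThan_iff)

lemma V_iff: "w \<in> V \<longleftrightarrow> length w = l \<and> set w \<subseteq> {..<d}"
  by (simp add: debruijn_vertices_def)

lemma modX_iff: "w \<in> V \<Longrightarrow> w \<in> modX d xs \<longleftrightarrow> butlast w = xs"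
proof
  assume "w \<in> V" "w \<in> modX d xs" then show "butlast w = xs" by (auto simp: modX_def)
next
  assume w: "w \<in> V" "butlast w = xs"
  then have "w \<noteq> []" using l0 by (auto simp: V_iff)
  then have "w = xs @ [last w]" using w append_butlast_last_id by metis
  moreover have "last w < d" using w \<open>w \<noteq> []\<close> last_in_set by (auto simp: V_iff)
  ultimately show "w \<in> modX d xs" by (auto simp: modX_def)
qed

lemma A_iff: "(a,b) \<in> A \<longleftrightarrow> (a \<in> V \<and> b \<in> V \<and> tl a = butlast b \<and> butlast a \<noteq> xs)
   \<or> (\<exists>k j. k < d \<and> j < d \<and> a = xs @ [k] \<and> b = tl xs @ [\<alpha> j k, j])"
  unfolding modified_debruijn_arcs_def debruijn_arcs_def using modX_iff by auto

lemma xsk_V: "k < d \<Longrightarrow> xs @ [k] \<in> V"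
  using setxs lenxs l0 by (auto simp: V_iff)

lemma new_V: "k < d \<Longrightarrow> j < d \<Longrightarrow> tl xs @ [\<alpha> j k, j] \<in> V"
  using setxs lenxs l3 alpha_range by (auto simp: V_iff dest: list.set_sel(2)[OF xs_ne])

lemma A_V: "(a,b) \<in> A \<Longrightarrow> a \<in> V \<and> b \<in> V"
  using A_iff xsk_V new_V by auto

end

context DB begin

definition Inv where "Inv u i q \<longleftrightarrow> length q = l-1 \<and> set q \<subseteq> {..<d} \<and> (\<forall>e<d. (u, q@[e]) \<in> A^^i)"

lemma Inv_step: assumes I: "Inv u i q" and a: "a < d" shows "Inv u (Suc i) (tl q @ [a])"
proof -
  have lq: "length q = l - 1" and sq: "set q \<subseteq> {..<d}" and w: "\<forall>e<d. (u, q@[e]) \<in> A^^i"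
    using I by (auto simp: Inv_def)
  have qne: "q \<noteq> []" using lq l3 by auto
  have stq: "set (tl q) \<subseteq> {..<d}" using sq qne by (meson list.set_sel(2) subset_iff)
  have "(u, (tl q @ [a]) @ [e]) \<in> A^^Suc i" if e: "e < d" for e
  proof (cases "q = xs")
    case True
    obtain k where k: "k < d" "\<alpha> e k = a" using alpha_surj e a by blast
    have "(u, q@[k]) \<in> A^^i" using w k by auto
    moreover have "(xs @ [k], tl xs @ [\<alpha> e k, e]) \<in> A" using k e by (auto simp: A_iff)
    ultimately show ?thesis using True k by (auto intro: relpow_Suc_I)
  next
    case False
    have "(u, q@[a]) \<in> A^^i" using w a by auto
    moreover have "(q @ [a], tl q @ [a, e]) \<in> A"
      unfolding A_iff using False qne lq sq stq a e l3 by (auto simp: V_iff butlast_append)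
    ultimately show ?thesis by (auto intro: relpow_Suc_I)
  qed
  then show ?thesis using lq stq a qne l3 by (auto simp: Inv_def)
qed

lemma Inv_iter: "Inv u i q \<Longrightarrow> set p \<subseteq> {..<d} \<Longrightarrow> length p \<le> l-1 \<Longrightarrow>
   Inv u (i + length p) (drop (length p) q @ p)"
proof (induction p rule: rev_induct)
  case Nil then show ?case by simp
next
  case (snoc a p)
  have I: "Inv u (i + length p) (drop (length p) q @ p)" using snoc by auto
  have lq: "length q = l - 1" using snoc.prems by (auto simp: Inv_def)
  have "Inv u (Suc (i + length p)) (tl (drop (length p) q @ p) @ [a])"
    using Inv_step[OF I] snoc.prems by auto
  moreover have "tl (drop (length p) q @ p) = drop (Suc (length p)) q @ p"
    using lq snoc.prems by (simp add: drop_Suc tl_drop)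
  ultimately show ?case by simp
qed

lemma walk_l: assumes u: "u \<in> V" and v: "v \<in> V" shows "(u,v) \<in> A^^l"
proof -
  have lu: "length u = l" and su: "set u \<subseteq> {..<d}" using u by (auto simp: V_iff)
  have lv: "length v = l" and sv: "set v \<subseteq> {..<d}" using v by (auto simp: V_iff)
  have une: "u \<noteq> []" and vne: "v \<noteq> []" using lu lv l3 by auto
  have sbv: "set (butlast v) \<subseteq> {..<d}" using sv by (meson in_set_butlastD subset_iff)
  have lastv: "last v < d" using sv vne last_in_set by blast
  have vdec: "v = butlast v @ [last v]" using vne by simp
  show ?thesis
  proof (cases "butlast u = xs")
    case False
    have stu: "set (tl u) \<subseteq> {..<d}" using su une by (meson list.set_sel(2) subset_iff)
    have "Inv u 1 (tl u)" unfolding Inv_def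
    proof (intro conjI allI impI)
      fix e assume e: "e < d"
      have "(u, tl u @ [e]) \<in> A" unfolding A_iff using False u lu e stu l3 by (auto simp: V_iff)
      then show "(u, tl u @ [e]) \<in> A^^1" by simp
    qed (use lu stu in auto)
    from Inv_iter[OF this sbv] have "Inv u (1 + (l-1)) (drop (l-1) (tl u) @ butlast v)"
      using lv by simp
    then have "Inv u l (butlast v)" using lu l3 by simp
    then show ?thesis using lastv vdec by (metis Inv_def)
  next
    case True
    define k where "k = last u"
    have k: "k < d" using su une last_in_set k_def by blast
    have ueq: "u = xs @ [k]" using True une k_def by (metis append_butlast_last_id)
    define w1 where "w1 = tl xs @ [\<alpha> (v!0) k, v!0]"
    have v0: "v!0 < d" using sv vne by (simp add: subset_iff)
    have a1: "(u, w1) \<in> A" unfolding w1_def ueq A_iff using k v0 by blast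
    have w1V: "w1 \<in> V" using new_V k v0 w1_def by simp
    have bw1: "butlast w1 \<noteq> xs" unfolding w1_def using not_const
      by (simp add: butlast_append)
    have stw: "set (tl w1) \<subseteq> {..<d}" using w1V by (auto simp: V_iff) (metis list.sel(2) list.set_sel(2) lessThan_iff subset_iff)
    have lw1: "length w1 = l" using w1V by (simp add: V_iff)
    have "Inv u 2 (tl w1)" unfolding Inv_def
    proof (intro conjI allI impI)
      fix e assume e: "e < d"
      have "(w1, tl w1 @ [e]) \<in> A" unfolding A_iff using bw1 w1V lw1 e stw l3 by (auto simp: V_iff)
      then show "(u, tl w1 @ [e]) \<in> A^^2" using a1 by (auto simp: numeral_2_eq_2 intro: relpow_Suc_I)
    qed (use lw1 stw in auto)
    moreover have "set (tl (butlast v)) \<subseteq> {..<d}" using sbv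
      by (metis list.sel(2) list.set_sel(2) subset_iff)
    moreover have "length (tl (butlast v)) \<le> l - 1" using lv by simp
    ultimately have "Inv u (2 + length (tl (butlast v))) (drop (length (tl (butlast v))) (tl w1) @ tl (butlast v))"
      using Inv_iter by blast
    moreover have "length (tl (butlast v)) = l - 2" using lv by simp
    ultimately have "Inv u (2 + (l-2)) (drop (l-2) (tl w1) @ tl (butlast v))" by simp
    moreover have "drop (l-2) (tl w1) = [v!0]"
    proof -
      have "tl xs \<noteq> []" using lenxs l3 by (cases xs) auto
      then have "tl w1 = tl (tl xs) @ [\<alpha> (v!0) k, v!0]" unfolding w1_def by (simp add: tl_append2)
      moreover have "length (tl (tl xs)) = l - 3" using lenxs by simp
      ultimately show ?thesis using l3 by (simp add: drop_append numeral_3_eq_3 numeral_2_eq_2 Suc_diff_Suc)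
    qed
    moreover have "[v!0] @ tl (butlast v) = butlast v" using lv l3
      by (cases v) auto
    ultimately have "Inv u (2 + (l-2)) (butlast v)" by simp
    moreover have "2 + (l-2) = l" using l3 by simp
    ultimately have "Inv u l (butlast v)" by simp
    then show ?thesis using lastv vdec by (metis Inv_def)
  qed
qed

lemma walk_B: assumes u: "u \<in> V" shows "set p \<subseteq> {..<d} \<Longrightarrow> length p \<le> l \<Longrightarrow> (u, drop (length p) u @ p) \<in> B^^(length p)"
proof (induction p rule: rev_induct)
  case Nil then show ?case by simp
next
  case (snoc a p)
  have lu: "length u = l" and su: "set u \<subseteq> {..<d}" using u by (auto simp: V_iff)
  have IH: "(u, drop (length p) u @ p) \<in> B^^(length p)" using snoc by auto
  have sd: "set (drop (length p) u) \<subseteq> {..<d}" using su by (meson in_set_dropD subset_iff)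
  have sd2: "set (drop (length p) (tl u)) \<subseteq> {..<d}" using su by (metis drop_Suc in_set_dropD subset_iff)
  have "(drop (length p) u @ p, drop (Suc (length p)) u @ p @ [a]) \<in> B"
    unfolding debruijn_arcs_def using snoc.prems lu sd su sd2
    by (auto simp: V_iff drop_Suc tl_drop butlast_append)
  then show ?case using IH by (auto intro: relpow_Suc_I)
qed

lemma walk_Bl: "u \<in> V \<Longrightarrow> v \<in> V \<Longrightarrow> (u,v) \<in> B^^l"
  using walk_B[of u v] by (auto simp: V_iff)

end


lemma lower_gen:
  fixes R :: "(nat list \<times> nat list) set"
  assumes H1: "\<And>a b. (a,b) \<in> R \<Longrightarrow> length a = l \<and> take (l-2) b = take (l-2) (tl a)"
    and H2: "\<And>b. (replicate l c, b) \<in> R \<Longrightarrow> take (l-1) b = replicate (l-1) c"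
  shows "(replicate l c, w) \<in> R^^m \<Longrightarrow> m \<le> l \<Longrightarrow> take (l-m) w = replicate (l-m) c"
proof (induction m arbitrary: w)
  case 0 then show ?case by auto
next
  case (Suc m)
  obtain w' where w': "(replicate l c, w') \<in> R^^m" "(w', w) \<in> R" using Suc.prems(1) by auto
  show ?case
  proof (cases m)
    case 0
    then have "w' = replicate l c" using w' by simp
    then show ?thesis using H2 w' 0 by simp
  next
    case (Suc m')
    have IH: "take (l-m) w' = replicate (l-m) c" using Suc.IH w' Suc.prems by simp
    have "take (l - Suc m) w = take (l - Suc m) (take (l-2) w)" using Suc by simp
    also have "\<dots> = take (l - Suc m) (take (l-2) (tl w'))" using H1 w' by simp
    also have "\<dots> = take (l - Suc m) (tl w')" using Suc by simp
    also have "\<dots> = tl (take (l - m) w')" using Suc.prems by (simp add: take_tl_eq Suc_diff_Suc)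
    also have "\<dots> = replicate (l - Suc m) c" using IH by simp
    finally show ?thesis .
  qed
qed

context DB begin

lemma take_butlast_l: "length b = l \<Longrightarrow> take (l-2) (butlast b) = take (l-2) b"
  by (cases b rule: rev_cases) (auto simp: take_append)

lemma no_short: "m < l \<Longrightarrow> (replicate l 0, replicate l 1) \<notin> A^^m"
proof
  assume m: "m < l" and w: "(replicate l 0, replicate l (1::nat)) \<in> A^^m"
  have "take (l-m) (replicate l (1::nat)) = replicate (l-m) 0"
  proof (rule lower_gen[OF _ _ w])
    fix a b assume ab: "(a,b) \<in> A"
    then have "a \<in> V" "b \<in> V" using A_V by auto
    then have la: "length a = l" and lb: "length b = l" by (auto simp: V_iff)
    show "length a = l \<and> take (l-2) b = take (l-2) (tl a)"
    proof (cases "\<exists>k j. k < d \<and> j < d \<and> a = xs @ [k] \<and> b = tl xs @ [\<alpha> j k, j]")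
      case True
      then obtain k j where "a = xs @ [k]" "b = tl xs @ [\<alpha> j k, j]" by blast
      then show ?thesis using la lenxs xs_ne by (simp add: tl_append2)
    next
      case False
      then have "tl a = butlast b" using ab A_iff by blast
      then show ?thesis using la lb by (simp add: take_butlast_l)
    qed
  next
    fix b assume ab: "(replicate l 0, b) \<in> A"
    have "replicate l (0::nat) = replicate (l-1) 0 @ [0]" using l0
      by (metis Suc_diff_1 replicate_Suc replicate_append_same)
    then have nx: "butlast (replicate l (0::nat)) \<noteq> xs" using not_rep by (metis butlast_snoc)
    have "\<not> (\<exists>k. replicate l (0::nat) = xs @ [k])"
      using nx by (metis butlast_snoc)
    then have "tl (replicate l 0) = butlast b" "b \<in> V" using ab A_iff by blast+
    then show "take (l-1) b = replicate (l-1) 0" by (simp add: butlast_conv_take V_iff)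
  qed (use m in simp)
  then show False using m by (cases "l - m") auto
qed

lemma no_short_B: "m < l \<Longrightarrow> (replicate l 0, replicate l 1) \<notin> B^^m"
proof
  assume m: "m < l" and w: "(replicate l 0, replicate l (1::nat)) \<in> B^^m"
  have "take (l-m) (replicate l (1::nat)) = replicate (l-m) 0"
  proof (rule lower_gen[OF _ _ w])
    fix a b assume ab: "(a,b) \<in> B"
    then show "length a = l \<and> take (l-2) b = take (l-2) (tl a)"
      by (auto simp: debruijn_arcs_def V_iff take_butlast_l[symmetric])
  next
    fix b assume ab: "(replicate l 0, b) \<in> B"
    then show "take (l-1) b = replicate (l-1) 0"
      by (auto simp: debruijn_arcs_def butlast_conv_take V_iff)
  qed (use m in simp)
  then show False using m by (cases "l - m") auto
qed

lemma rep_V: "c < d \<Longrightarrow> replicate l c \<in> V" by (auto simp: V_iff)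

end

context DB begin

lemma out_deg: assumes v: "v \<in> V" shows "card {w. (v,w) \<in> A} = d"
proof -
  have lv: "length v = l" and sv: "set v \<subseteq> {..<d}" using v by (auto simp: V_iff)
  have vne: "v \<noteq> []" using lv l0 by auto
  show ?thesis
  proof (cases "butlast v = xs")
    case True
    define k where "k = last v"
    have veq: "v = xs @ [k]" using True vne k_def by (metis append_butlast_last_id)
    have k: "k < d" using sv vne last_in_set k_def by blast
    have "{w. (v,w) \<in> A} = (\<lambda>j. tl xs @ [\<alpha> j k, j]) ` {..<d}"
      using True veq k by (auto simp: A_iff)
    moreover have "inj_on (\<lambda>j. tl xs @ [\<alpha> j k, j]) {..<d}"
      by (rule inj_onI) simp
    ultimately show ?thesis by (simp add: card_image)
  next
    case False
    have stv: "set (tl v) \<subseteq> {..<d}" using sv vne by (meson list.set_sel(2) subset_iff)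
    have "{w. (v,w) \<in> A} = (\<lambda>j. tl v @ [j]) ` {..<d}"
    proof (intro equalityI subsetI)
      fix w assume "w \<in> {w. (v,w) \<in> A}"
      then have "(v, w) \<in> A" by simp
      moreover have "\<not> (\<exists>k. v = xs @ [k])" using False by auto
      ultimately have w: "w \<in> V" "tl v = butlast w" using A_iff by blast+
      then have "w \<noteq> []" "last w < d" using l0 last_in_set by (auto simp: V_iff)
      then have "w = tl v @ [last w]" "last w < d" using w by auto
      then show "w \<in> (\<lambda>j. tl v @ [j]) ` {..<d}" by blast
    next
      fix w assume "w \<in> (\<lambda>j. tl v @ [j]) ` {..<d}"
      then obtain j where j: "j < d" "w = tl v @ [j]" by auto
      have "(v, w) \<in> A" unfolding A_iff using False v lv stv j l0 by (auto simp: V_iff)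
      then show "w \<in> {w. (v,w) \<in> A}" by simp
    qed
    moreover have "inj_on (\<lambda>j. tl v @ [j]) {..<d}" by (rule inj_onI) simp
    ultimately show ?thesis by (simp add: card_image)
  qed
qed

lemma in_deg: assumes v: "v \<in> V" shows "card {u. (u,v) \<in> A} = d"
proof -
  have lv: "length v = l" and sv: "set v \<subseteq> {..<d}" using v by (auto simp: V_iff)
  have vne: "v \<noteq> []" using lv l0 by auto
  have lastv: "last v < d" using sv vne last_in_set by blast
  have v2: "v ! (l-2) < d" using sv lv l3 by (simp add: subset_iff)
  obtain k0 where k0: "k0 < d" "\<alpha> (last v) k0 = v ! (l-2)" using alpha_surj lastv v2 by blast
  define P where "P \<longleftrightarrow> butlast (butlast v) = tl xs"
  define f where "f c = (if P \<and> c = hd xs then xs @ [k0] else c # butlast v)" for c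
  have xsd: "xs = hd xs # tl xs" using xs_ne by simp
  have hxs: "hd xs < d" using setxs xs_ne by (simp add: subset_iff)
  have sbv: "set (butlast v) \<subseteq> {..<d}" using sv by (meson in_set_butlastD subset_iff)
  have vdec: "v = butlast (butlast v) @ [v ! (l-2), last v]" using bb_decomp[of v] lv l3 by simp
  have bbv0: "butlast v \<noteq> []" using lv l3 by (cases v rule: rev_cases) auto
  have "{u. (u,v) \<in> A} = f ` {..<d}"
  proof (intro equalityI subsetI)
    fix u assume "u \<in> {u. (u,v) \<in> A}"
    then have uv: "(u,v) \<in> A" by simp
    show "u \<in> f ` {..<d}"
    proof (cases "\<exists>k j. k < d \<and> j < d \<and> u = xs @ [k] \<and> v = tl xs @ [\<alpha> j k, j]")
      case True
      then obtain k j where kj: "k < d" "j < d" "u = xs @ [k]" "v = tl xs @ [\<alpha> j k, j]" by blast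
      have "P" unfolding P_def using kj by (simp add: butlast_append)
      have "last v = j" "v ! (l-2) = \<alpha> j k" using kj lenxs l3 by (auto simp: nth_append)
      then have "k = k0" using alpha_inj[of j k k0] k0 kj by simp
      then have "f (hd xs) = u" using \<open>P\<close> kj by (simp add: f_def)
      then show ?thesis using hxs by blast
    next
      case False
      then have u: "u \<in> V" "tl u = butlast v" "butlast u \<noteq> xs" using uv A_iff by blast+
      have une: "u \<noteq> []" using u l0 by (auto simp: V_iff)
      have ueq: "u = hd u # butlast v" using u une by (metis list.collapse)
      have hu: "hd u < d" using u une by (auto simp: V_iff subset_iff)
      have "\<not> (P \<and> hd u = hd xs)"
      proof
        assume h: "P \<and> hd u = hd xs"
        have "butlast u = hd u # butlast (butlast v)"
          using ueq bbv0 by (metis butlast.simps(2))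
        then have "butlast u = xs" using h xsd P_def by simp
        then show False using u by simp
      qed
      then have "f (hd u) = u" using ueq unfolding f_def by (metis (full_types))
      then show ?thesis using hu by (metis image_eqI lessThan_iff)
    qed
  next
    fix u assume "u \<in> f ` {..<d}"
    then obtain c where c: "c < d" "u = f c" by auto
    show "u \<in> {u. (u,v) \<in> A}"
    proof (cases "P \<and> c = hd xs")
      case True
      then have "u = xs @ [k0]" using c by (simp add: f_def)
      moreover have "v = tl xs @ [\<alpha> (last v) k0, last v]" using vdec True k0 P_def by simp
      ultimately have "(u,v) \<in> A" unfolding A_iff using k0 lastv by blast
      then show ?thesis by simp
    next
      case False
      then have ueq: "u = c # butlast v" using c False unfolding f_def by auto
      have bbv: "butlast v \<noteq> []" using lv l3 by (cases v rule: rev_cases) auto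
      have "butlast u = c # butlast (butlast v)" using ueq bbv by simp
      then have "butlast u \<noteq> xs" using False xsd P_def by (metis list.inject)
      moreover have "u \<in> V" using ueq c sbv lv vne by (auto simp: V_iff)
      ultimately have "(u,v) \<in> A" unfolding A_iff using ueq v by simp
      then show ?thesis by simp
    qed
  qed
  moreover have "inj_on f {..<d}"
  proof (rule inj_onI)
    fix x y assume "f x = f y"
    moreover have "hd (f c) = c" for c using xs_ne by (simp add: f_def)
    ultimately show "x = y" by metis
  qed
  ultimately show ?thesis by (simp add: card_image)
qed

end

theorem mainTheorem6:
  fixes d l :: nat and xs :: "nat list" and \<alpha> :: "nat \<Rightarrow> nat \<Rightarrow> nat"
  assumes "0 < d" and "0 < l"
    and "length xs = l - 1" and "set xs \<subseteq> {..<d}"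
    and "\<exists>i<length xs. \<exists>j<length xs. xs ! i \<noteq> xs ! j"
    and "\<forall>j<d. bij_betw (\<alpha> j) {..<d} {..<d}"
  shows "d_regular (debruijn_vertices d l) (modified_debruijn_arcs d l xs \<alpha>) d
       \<and> has_diameter (debruijn_vertices d l) (modified_debruijn_arcs d l xs \<alpha>) l
       \<and> has_diameter (debruijn_vertices d l) (debruijn_arcs d l) l
       \<and> reachable_exactly (debruijn_vertices d l) (modified_debruijn_arcs d l xs \<alpha>) l"
proof -
  interpret DB d l xs \<alpha> using assms by unfold_locales auto
  have r0: "replicate l 0 \<in> V" and r1: "replicate l 1 \<in> V" using rep_V d2 by auto
  have reg: "d_regular V A d" unfolding d_regular_def using out_deg in_deg by blast
  have diamA: "has_diameter V A l" unfolding has_diameter_def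
    using walk_l no_short r0 r1 by blast
  have diamB: "has_diameter V B l" unfolding has_diameter_def
    using walk_Bl no_short_B r0 r1 by blast
  have apw: "all_pairs_walk V A l" unfolding all_pairs_walk_def using walk_l by blast
  have "reachable_exactly V A l" unfolding reachable_exactly_def
    using diamA apw by auto
  then show ?thesis using reg diamA diamB by blast
qed

end
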